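(* Under the standing setting and assumptions (A1)–(A3) described in the context, the optimal payoff map $\mathcal R$ is outer semicontinuous at every $X\in\mathcal X$.
   Context: Let $\mathcal X$ be a Hausdorff, first countable, locally convex topological vector space over $\mathbb R$, partially ordered by a partial order $\geq$ with positive cone $\mathcal X_+=\{X\in\mathcal X: X\geq 0\}$. Let $\mathcal M\subset\mathcal X$ be a vector subspace with $1<\dim\mathcal M<\infty$, carrying the relative topology, and let $\pi:\mathcal M\to\mathbb R$ be linear. Standing assumptions: (A1) there is $U\in\mathcal M\cap\mathcal X_+$ with $\pi(U)=1$; (A2) $\mathcal A\subsetneq\mathcal X$ is closed, contains $0$, and satisfies $\mathcal A+\mathcal X_+\subset\mathcal A$; (A3) the map $\rho:\mathcal X\to[-\infty,\infty]$, $\rho(X)=\inf\{\pi(Z): Z\in\mathcal M,\ X+Z\in\mathcal A\}$, is finitely valued and continuous. The optimal payoff map is $\mathcal R(X)=\{Z\in\mathcal M: X+Z\in\mathcal A,\ \pi(Z)=\rho(X)\}$. $\mathcal R$ is outer semicontinuous at $X$ if for every $Z\notin\mathcal R(X)$ there are open neighborhoods $\mathcal U_X\subset\mathcal X$ of $X$ and $\mathcal U_Z\subset\mathcal M$ of $Z$ such that $\mathcal R(Y)\cap\mathcal U_Z=\emptyset$ for all $Y\in\mathcal U_X$. *)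

theory Defs
  imports "HOL-Analysis.Analysis"
begin

text \<open>Hausdorffness and
  first countability are imposed through the type classes t2_space and
  first_countable_topology in the theorem.\<close>
definition locally_convex_tvs :: "'a::{real_vector, topological_space} itself \<Rightarrow> bool" where
  "locally_convex_tvs _ \<longleftrightarrow>
     continuous_on UNIV (\<lambda>(x::'a, y::'a). x + y) \<and>
     continuous_on UNIV (\<lambda>(c::real, x::'a). c *\<^sub>R x) \<and>
     (\<forall>U (x::'a). open U \<and> x \<in> U \<longrightarrow> (\<exists>V. open V \<and> convex V \<and> x \<in> V \<and> V \<subseteq> U))"

definition pos_cone :: "('a \<Rightarrow> 'a \<Rightarrow> bool) \<Rightarrow> 'a::zero set" where
  "pos_cone ge = {X. ge X 0}"

definition linear_on :: "'a::real_vector set \<Rightarrow> ('a \<Rightarrow> real) \<Rightarrow> bool" where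
  "linear_on M \<pi>\<^sub>0 \<longleftrightarrow>
     (\<forall>x\<in>M. \<forall>y\<in>M. \<pi>\<^sub>0 (x + y) = \<pi>\<^sub>0 x + \<pi>\<^sub>0 y) \<and> (\<forall>c. \<forall>x\<in>M. \<pi>\<^sub>0 (c *\<^sub>R x) = c * \<pi>\<^sub>0 x)"

definition rho :: "'a::real_vector set \<Rightarrow> ('a \<Rightarrow> real) \<Rightarrow> 'a set \<Rightarrow> 'a \<Rightarrow> ereal" where
  "rho M \<pi>\<^sub>0 A X = Inf ((\<lambda>Z. ereal (\<pi>\<^sub>0 Z)) ` {Z \<in> M. X + Z \<in> A})"

definition optR :: "'a::real_vector set \<Rightarrow> ('a \<Rightarrow> real) \<Rightarrow> 'a set \<Rightarrow> 'a \<Rightarrow> 'a set" where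
  "optR M \<pi>\<^sub>0 A X = {Z \<in> M. X + Z \<in> A \<and> ereal (\<pi>\<^sub>0 Z) = rho M \<pi>\<^sub>0 A X}"

definition outer_semicont_at :: "'a::topological_space set \<Rightarrow> ('a \<Rightarrow> 'a set) \<Rightarrow> 'a \<Rightarrow> bool" where
  "outer_semicont_at M R X \<longleftrightarrow>
     (\<forall>Z\<in>M. Z \<notin> R X \<longrightarrow>
        (\<exists>UX UZ. open UX \<and> X \<in> UX \<and> openin (top_of_set M) UZ \<and> Z \<in> UZ \<and>
                 (\<forall>Y\<in>UX. R Y \<inter> UZ = {})))"

end

theory Submission
  imports Defs
begin

lemma Inf_shift: "Inf ((\<lambda>x. x + ereal c) ` S) = Inf S + ereal (c::real)"
proof (rule antisym)
  show "Inf ((\<lambda>x. x + ereal c) ` S) \<le> Inf S + ereal c"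
  proof -
    have "Inf ((\<lambda>x. x + ereal c) ` S) - ereal c \<le> Inf S"
    proof (rule Inf_greatest)
      fix s assume "s \<in> S"
      then have "Inf ((\<lambda>x. x + ereal c) ` S) \<le> s + ereal c" by (simp add: Inf_lower)
      then show "Inf ((\<lambda>x. x + ereal c) ` S) - ereal c \<le> s"
        by (simp add: ereal_minus_le)
    qed
    then show ?thesis by (simp add: ereal_minus_le)
  qed
  show "Inf S + ereal c \<le> Inf ((\<lambda>x. x + ereal c) ` S)"
    by (rule Inf_greatest) (auto intro: add_right_mono Inf_lower)
qed

lemma rho_shift:
  assumes subM: "subspace M" and lin: "linear_on M \<pi>\<^sub>0" and W: "W \<in> M"
  shows "rho M \<pi>\<^sub>0 A (Y - W) = rho M \<pi>\<^sub>0 A Y + ereal (\<pi>\<^sub>0 W)"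
proof -
  let ?S = "{Z'\<in>M. Y + Z' \<in> A}"
  have set: "{Z\<in>M. Y - W + Z \<in> A} = (\<lambda>Z'. Z' + W) ` ?S"
  proof
    show "{Z\<in>M. Y - W + Z \<in> A} \<subseteq> (\<lambda>Z'. Z' + W) ` ?S"
    proof
      fix Z assume Z: "Z \<in> {Z\<in>M. Y - W + Z \<in> A}"
      then have "Z - W \<in> ?S" using subM W by (auto simp: subspace_diff algebra_simps)
      moreover have "Z = (Z - W) + W" by simp
      ultimately show "Z \<in> (\<lambda>Z'. Z' + W) ` ?S" by blast
    qed
    show "(\<lambda>Z'. Z' + W) ` ?S \<subseteq> {Z\<in>M. Y - W + Z \<in> A}"
      using subM W by (auto simp: subspace_add algebra_simps)
  qed
  have img: "(\<lambda>Z. ereal (\<pi>\<^sub>0 Z)) ` ((\<lambda>Z'. Z' + W) ` ?S)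
      = (\<lambda>x. x + ereal (\<pi>\<^sub>0 W)) ` ((\<lambda>Z. ereal (\<pi>\<^sub>0 Z)) ` ?S)"
    using lin W unfolding linear_on_def image_image by (intro image_cong) auto
  show ?thesis unfolding rho_def set img Inf_shift ..
qed

theorem mainTheorem3:
  fixes ge :: "'a::{real_vector, t2_space, first_countable_topology} \<Rightarrow> 'a \<Rightarrow> bool"
    and M A :: "'a set"
    and \<pi>\<^sub>0 :: "'a \<Rightarrow> real"
  assumes tvs: "locally_convex_tvs TYPE('a)"
    and po: "partial_order_on UNIV {(x, y). ge y x}"
    and subM: "subspace M"
    and finM: "\<exists>B. finite B \<and> independent B \<and> span B = M"
    and dimM: "1 < dim M"
    and lin: "linear_on M \<pi>\<^sub>0"
    and A1: "\<exists>U\<in>M. U \<in> pos_cone ge \<and> \<pi>\<^sub>0 U = 1"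
    and A2_closed: "closed A" and A2_zero: "0 \<in> A" and A2_proper: "A \<noteq> UNIV"
    and A2_mono: "\<forall>X\<in>A. \<forall>P\<in>pos_cone ge. X + P \<in> A"
    and A3_finite: "\<forall>X. \<bar>rho M \<pi>\<^sub>0 A X\<bar> \<noteq> \<infinity>"
    and A3_cont: "continuous_on UNIV (rho M \<pi>\<^sub>0 A)"
  shows "\<forall>X. outer_semicont_at M (optR M \<pi>\<^sub>0 A) X"
proof
  fix X
  define f where "f Y = real_of_ereal (rho M \<pi>\<^sub>0 A Y)" for Y
  have fE: "ereal (f Y) = rho M \<pi>\<^sub>0 A Y" for Y
    using A3_finite f_def ereal_real' by auto
  have fc: "continuous_on UNIV f"
    using continuous_on_iff_real[of UNIV "rho M \<pi>\<^sub>0 A"] A3_finite A3_cont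
    unfolding f_def o_def by auto
  have add_c: "continuous_on UNIV (\<lambda>p::'a\<times>'a. fst p + snd p)"
    using tvs unfolding locally_convex_tvs_def by (simp add: case_prod_unfold)
  have sm: "continuous_on UNIV (\<lambda>p::real\<times>'a. fst p *\<^sub>R snd p)"
    using tvs unfolding locally_convex_tvs_def by (simp add: case_prod_unfold)
  have neg_c: "continuous_on UNIV (\<lambda>W::'a. - W)"
  proof -
    have "continuous_on UNIV ((\<lambda>p::real\<times>'a. fst p *\<^sub>R snd p) \<circ> (\<lambda>W. (-1, W)))"
      by (rule continuous_on_compose) (auto intro!: continuous_intros sm[THEN continuous_on_subset])
    then show ?thesis by (simp add: o_def)
  qed
  have piM: "\<pi>\<^sub>0 W = f (- W) - f 0" if "W \<in> M" for W
  proof -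
    have "rho M \<pi>\<^sub>0 A (0 - W) = rho M \<pi>\<^sub>0 A 0 + ereal (\<pi>\<^sub>0 W)"
      by (rule rho_shift[OF subM lin that])
    then have "ereal (f (-W)) = ereal (f 0) + ereal (\<pi>\<^sub>0 W)" by (simp add: fE)
    then show ?thesis by simp
  qed
  define C where "C = {p::'a\<times>'a. fst p + snd p \<in> A} \<inter> {p. f (- snd p) - f 0 = f (fst p)}"
  have c1: "closed {p::'a\<times>'a. fst p + snd p \<in> A}"
  proof -
    have "closed ((\<lambda>p::'a\<times>'a. fst p + snd p) -` A)"
      by (rule continuous_closed_vimage[OF A2_closed])
        (use add_c in \<open>auto simp add: continuous_on_eq_continuous_at\<close>)
    then show ?thesis by (simp add: vimage_def)
  qed
  have c2: "closed {p::'a\<times>'a. f (- snd p) - f 0 = f (fst p)}"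
  proof (rule closed_Collect_eq)
    show "continuous_on UNIV (\<lambda>p::'a\<times>'a. f (- snd p) - f 0)"
    proof (intro continuous_intros)
      show "continuous_on UNIV (\<lambda>p::'a\<times>'a. f (- snd p))"
        using continuous_on_compose2[OF continuous_on_compose2[OF fc neg_c] continuous_on_snd[OF continuous_on_id]]
        by simp
    qed
    show "continuous_on UNIV (\<lambda>p::'a\<times>'a. f (fst p))"
      using continuous_on_compose2[OF fc continuous_on_fst[OF continuous_on_id]]
      by simp
  qed
  have Cc: "closed C" unfolding C_def using c1 c2 by (rule closed_Int)
  have memC: "(Y, W) \<in> C" if "W \<in> optR M \<pi>\<^sub>0 A Y" for Y W
  proof -
    from that have W: "W \<in> M" "Y + W \<in> A" "ereal (\<pi>\<^sub>0 W) = ereal (f Y)"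
      unfolding optR_def by (auto simp: fE)
    then show ?thesis using piM[OF W(1)] unfolding C_def by simp
  qed
  show "outer_semicont_at M (optR M \<pi>\<^sub>0 A) X"
    unfolding outer_semicont_at_def
  proof (intro ballI impI)
    fix Z assume ZM: "Z \<in> M" and Zn: "Z \<notin> optR M \<pi>\<^sub>0 A X"
    have "(X, Z) \<notin> C"
    proof
      assume "(X, Z) \<in> C"
      then have "X + Z \<in> A" "\<pi>\<^sub>0 Z = f X" using piM[OF ZM] unfolding C_def by auto
      then have "Z \<in> optR M \<pi>\<^sub>0 A X" using ZM unfolding optR_def by (auto simp: fE[symmetric])
      with Zn show False by simp
    qed
    moreover have "open (- C)" using Cc by (simp add: open_Compl)
    ultimately obtain UX V where UV: "open UX" "open V" "(X, Z) \<in> UX \<times> V" "UX \<times> V \<subseteq> - C"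
      by (metis ComplI open_prod_elim)
    show "\<exists>UX UZ. open UX \<and> X \<in> UX \<and> openin (top_of_set M) UZ \<and> Z \<in> UZ \<and>
                 (\<forall>Y\<in>UX. optR M \<pi>\<^sub>0 A Y \<inter> UZ = {})"
    proof (intro exI conjI ballI)
      show "open UX" "X \<in> UX" using UV by auto
      show "openin (top_of_set M) (M \<inter> V)" using UV(2) by (rule openin_open_Int)
      show "Z \<in> M \<inter> V" using ZM UV by auto
      fix Y assume Y: "Y \<in> UX"
      show "optR M \<pi>\<^sub>0 A Y \<inter> (M \<inter> V) = {}"
      proof (rule ccontr)
        assume "optR M \<pi>\<^sub>0 A Y \<inter> (M \<inter> V) \<noteq> {}"
        then obtain W where "W \<in> optR M \<pi>\<^sub>0 A Y" "W \<in> V" by blast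
        then show False using memC[of W Y] UV(4) Y by blast
      qed
    qed
  qed
qed

end
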